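(* Given any non-empty closed subset $S$ of the extended real numbers $\overline{\mathbb{R}}$, there is a real valued function $f$ defined on the closed interval $[0,1]$ such that the set of right hand sequential secant derivatives of $f$ at $0$ equals $S$.
   Context: $\overline{\mathbb{R}}=\mathbb{R}\cup\{\pm\infty\}$. A set $S\subseteq\overline{\mathbb{R}}$ is called closed if every $L\in\overline{\mathbb{R}}$ for which there is a sequence of real numbers $L_n\in S\cap\mathbb{R}$ with $L_n\to L$ belongs to $S$. For $f:[0,1]\to\mathbb{R}$, $L\in\overline{\mathbb{R}}$ is a right hand sequential secant derivative of $f$ at $0$ if there is a sequence $h_n>0$ with $h_n\to0$ and $\frac{f(h_n)-f(0)}{h_n}\to L$ as $n\to\infty$. *)

theory Defs
  imports Complex_Main "HOL-Library.Extended_Real"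
begin

definition ereal_seq_closed :: "ereal set \<Rightarrow> bool" where
  "ereal_seq_closed S \<longleftrightarrow>
     (\<forall>(L::ereal) (x::nat \<Rightarrow> real).
        (\<forall>n. ereal (x n) \<in> S) \<and> (\<lambda>n. ereal (x n)) \<longlonglongrightarrow> L \<longrightarrow> L \<in> S)"

text \<open>Right hand sequential secant derivatives at 0 of f : [0,1] -> R.
  Only the values of f on [0,1] are used (h n ranges over (0,1]).\<close>
definition rh_seq_secant_derivs :: "(real \<Rightarrow> real) \<Rightarrow> ereal set" where
  "rh_seq_secant_derivs f =
     {L. \<exists>h::nat \<Rightarrow> real. (\<forall>n. 0 < h n \<and> h n \<le> 1) \<and> h \<longlonglongrightarrow> 0 \<and>
          (\<lambda>n. ereal ((f (h n) - f 0) / h n)) \<longlonglongrightarrow> L}"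

end

theory Submission
  imports Defs
begin

definition lg :: "real \<Rightarrow> real" where "lg t = 1 / (1 + exp (- t))"

definition psi :: "real \<Rightarrow> real" where
  "psi x = (let u = 1 / x - of_int \<lfloor>1 / x\<rfloor> in ln (u / (1 - u)))"

definition gS :: "ereal set \<Rightarrow> real \<Rightarrow> real" where
  "gS S x = (if psi x \<in> {t. ereal t \<in> S} then psi x
     else if \<infinity> \<in> S \<and> (psi x \<ge> 0 \<or> - \<infinity> \<notin> S) then 1 / x
     else if - \<infinity> \<in> S then - 1 / x else (SOME t. ereal t \<in> S))"

lemma lg_bounds: "0 < lg t" "lg t < 1"
  unfolding lg_def by (auto simp: field_simps add_pos_pos)

lemma lg_inv: "ln (lg t / (1 - lg t)) = t"
proof -
  have e: "exp (- t) > 0" by simp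
  have gen: "1/(1+e) / (1 - 1/(1+e)) = 1/e" if "e > 0" for e :: real
    using that by (simp add: field_simps)
  have "lg t / (1 - lg t) = 1 / exp (- t)"
    unfolding lg_def using gen[OF e] .
  also have "\<dots> = exp t" by (simp add: exp_minus field_simps)
  finally show ?thesis by simp
qed

lemma psi_hit: "psi (1 / (real k + 1 + lg t)) = t"
proof -
  have b: "0 < lg t" "lg t < 1" by (rule lg_bounds)+
  have pos: "real k + 1 + lg t > 0" using b by simp
  have fl: "\<lfloor>real k + 1 + lg t\<rfloor> = int k + 1"
    using b by (subst floor_eq_iff) auto
  have "1 / (1 / (real k + 1 + lg t)) = real k + 1 + lg t" using pos by simp
  hence "1 / (1 / (real k + 1 + lg t)) - of_int \<lfloor>1 / (1 / (real k + 1 + lg t))\<rfloor> = lg t"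
    using fl by simp
  thus ?thesis unfolding psi_def Let_def using lg_inv by simp
qed

lemma hseq: 
  fixes c :: "nat \<Rightarrow> real"
  assumes "\<And>k. 0 < c k" "\<And>k. c k < 1"
  shows "(\<lambda>k. 1 / (real k + 1 + c k)) \<longlonglongrightarrow> 0"
proof (rule real_tendsto_sandwich[of "\<lambda>_. 0" _ _ "\<lambda>n. inverse (real (Suc n))"])
  show "\<forall>\<^sub>F n in sequentially. 0 \<le> 1 / (real n + 1 + c n)"
    using assms by (auto intro!: always_eventually simp: add_pos_pos less_imp_le)
  have "1 / (real n + 1 + c n) \<le> inverse (real (Suc n))" for n
  proof -
    have "real n + 1 \<le> real n + 1 + c n" using assms(1)[of n] by simp
    thus ?thesis by (simp add: inverse_eq_divide frac_le)
  qed
  thus "\<forall>\<^sub>F n in sequentially. 1 / (real n + 1 + c n) \<le> inverse (real (Suc n))"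
    by (auto intro!: always_eventually)
qed (use LIMSEQ_inverse_real_of_nat in auto)

lemma final_step:
  assumes cl: "ereal_seq_closed S"
    and ev: "\<forall>\<^sub>F n in sequentially. ereal (z n) \<in> S"
    and lim: "(\<lambda>n. ereal (z n)) \<longlonglongrightarrow> L"
  shows "L \<in> S"
proof -
  obtain N where N: "\<And>n. n \<ge> N \<Longrightarrow> ereal (z n) \<in> S"
    using ev unfolding eventually_sequentially by blast
  have "(\<lambda>n. ereal (z (n + N))) \<longlonglongrightarrow> L"
    using LIMSEQ_ignore_initial_segment[OF lim, of N] by simp
  moreover have "\<forall>n. ereal (z (n + N)) \<in> S" using N by simp
  moreover note spec[OF spec[OF cl[unfolded ereal_seq_closed_def], of L], of "\<lambda>n. z (n + N)"]
  ultimately show ?thesis by simp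
qed

theorem theorem2p5:
  fixes S :: "ereal set"
  assumes "S \<noteq> {}" and "ereal_seq_closed S"
  shows "\<exists>f::real \<Rightarrow> real. rh_seq_secant_derivs f = S"
proof
  define g where "g = gS S"
  define f where "f = (\<lambda>x. x * g x)"
  have quot: "(f x - f 0) / x = g x" if "x > 0" for x
    using that unfolding f_def by simp
  have t0: "ereal (SOME t. ereal t \<in> S) \<in> S" if nP: "\<infinity> \<notin> S" and nM: "- \<infinity> \<notin> S"
  proof -
    obtain L where L: "L \<in> S" using assms(1) by blast
    then obtain t where "L = ereal t" using nP nM L by (cases L) auto
    with L show ?thesis by (metis someI_ex)
  qed
  show "rh_seq_secant_derivs f = S"
  proof
    show "rh_seq_secant_derivs f \<subseteq> S"
    proof
      fix L assume "L \<in> rh_seq_secant_derivs f"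
      then obtain h where h: "\<And>n. 0 < h n \<and> h n \<le> 1" "h \<longlonglongrightarrow> 0"
        and lim0: "(\<lambda>n. ereal ((f (h n) - f 0) / h n)) \<longlonglongrightarrow> L"
        unfolding rh_seq_secant_derivs_def by blast
      have lim: "(\<lambda>n. ereal (g (h n))) \<longlonglongrightarrow> L"
        using lim0 h(1) quot by simp
      show "L \<in> S"
      proof (cases L)
        case (real l)
        define B where "B = \<bar>l\<bar> + 1"
        have Bp: "B > 0" unfolding B_def by simp
        have e1: "\<forall>\<^sub>F n in sequentially. \<bar>g (h n) - l\<bar> < 1"
        proof -
          have lr: "(\<lambda>n. g (h n)) \<longlonglongrightarrow> l" using lim real by (simp add: lim_ereal)
          have a: "\<forall>\<^sub>F n in sequentially. g (h n) > l - 1" using order_tendstoD(1)[OF lr] by simp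
          have b: "\<forall>\<^sub>F n in sequentially. g (h n) < l + 1" using order_tendstoD(2)[OF lr] by simp
          from a b show ?thesis by eventually_elim auto
        qed
        have e2: "\<forall>\<^sub>F n in sequentially. h n < 1 / B"
          using order_tendstoD(2)[OF h(2), of "1/B"] Bp by simp
        have "\<forall>\<^sub>F n in sequentially. ereal (g (h n)) \<in> S"
          using e1 e2
        proof eventually_elim
          case (elim n)
          have hp: "h n > 0" using h(1) by simp
          have big: "1 / h n > B" using elim(2) hp Bp by (simp add: field_simps)
          have small: "\<bar>g (h n)\<bar> < B" using elim(1) unfolding B_def by linarith
          show ?case
          proof (cases "psi (h n) \<in> {t. ereal t \<in> S}")
            case True thus ?thesis unfolding g_def gS_def by simp
          next
            case False
            show ?thesis
            proof (cases "\<infinity> \<in> S \<and> (psi (h n) \<ge> 0 \<or> - \<infinity> \<notin> S)")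
              case True
              hence "g (h n) = 1 / h n" using False unfolding g_def gS_def by simp
              thus ?thesis using big small hp by simp
            next
              case F2: False
              show ?thesis
              proof (cases "- \<infinity> \<in> S")
                case True
                hence "g (h n) = - 1 / h n" unfolding g_def gS_def
                  by (subst if_not_P[OF False], subst if_not_P[OF F2], subst if_P[OF True]) (rule refl)
                thus ?thesis using big small hp by simp
              next
                case F3: False
                hence gv: "g (h n) = (SOME t. ereal t \<in> S)" using False F2 unfolding g_def gS_def by simp
                have "\<infinity> \<notin> S" using F2 F3 by simp
                thus ?thesis using t0 F3 gv by simp
              qed
            qed
          qed
        qed
        thus ?thesis using final_step[OF assms(2) _ lim] by simp
      next
        case PInf
        show ?thesis
        proof (cases "\<infinity> \<in> S")
          case True thus ?thesis using PInf by simp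
        next
          case notP: False
          define c where "c = max 0 (SOME t. ereal t \<in> S)"
          have "\<forall>\<^sub>F n in sequentially. ereal (g (h n)) > ereal c"
            using order_tendstoD(1)[OF lim, of "ereal c"] PInf by simp
          hence "\<forall>\<^sub>F n in sequentially. ereal (g (h n)) \<in> S"
          proof eventually_elim
            case (elim n)
            have hp: "h n > 0" using h(1) by simp
            show ?case
            proof (cases "psi (h n) \<in> {t. ereal t \<in> S}")
              case True thus ?thesis unfolding g_def gS_def by simp
            next
              case False
              show ?thesis
              proof (cases "- \<infinity> \<in> S")
                case True
                hence "g (h n) = - 1 / h n" using False notP unfolding g_def gS_def by simp
                moreover have "- 1 / h n < 0" using hp by simp
                ultimately show ?thesis using elim unfolding c_def by simp
              next
                case F3: False
                hence "g (h n) = (SOME t. ereal t \<in> S)" using False notP unfolding g_def gS_def by simp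
                thus ?thesis using elim unfolding c_def by simp
              qed
            qed
          qed
          thus ?thesis using final_step[OF assms(2) _ lim] by simp
        qed
      next
        case MInf
        show ?thesis
        proof (cases "- \<infinity> \<in> S")
          case True thus ?thesis using MInf by simp
        next
          case notM: False
          define c where "c = min 0 (SOME t. ereal t \<in> S)"
          have "\<forall>\<^sub>F n in sequentially. ereal (g (h n)) < ereal c"
            using order_tendstoD(2)[OF lim, of "ereal c"] MInf by simp
          hence "\<forall>\<^sub>F n in sequentially. ereal (g (h n)) \<in> S"
          proof eventually_elim
            case (elim n)
            have hp: "h n > 0" using h(1) by simp
            show ?case
            proof (cases "psi (h n) \<in> {t. ereal t \<in> S}")
              case True thus ?thesis unfolding g_def gS_def by simp
            next
              case False
              show ?thesis
              proof (cases "\<infinity> \<in> S")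
                case True
                hence "g (h n) = 1 / h n" using False notM unfolding g_def gS_def by simp
                moreover have "1 / h n > 0" using hp by simp
                ultimately show ?thesis using elim unfolding c_def by simp
              next
                case F3: False
                hence "g (h n) = (SOME t. ereal t \<in> S)" using False notM unfolding g_def gS_def by simp
                thus ?thesis using elim unfolding c_def by simp
              qed
            qed
          qed
          thus ?thesis using final_step[OF assms(2) _ lim] by simp
        qed
      qed
    qed
  next
    show "S \<subseteq> rh_seq_secant_derivs f"
    proof
      fix L assume LS: "L \<in> S"
      show "L \<in> rh_seq_secant_derivs f"
      proof (cases L)
        case (real t)
        define h where "h = (\<lambda>k::nat. 1 / (real k + 1 + lg t))"
        have hp: "0 < h n \<and> h n \<le> 1" for n
          using lg_bounds[of t] unfolding h_def by (auto simp: field_simps)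
        have hl: "h \<longlonglongrightarrow> 0" unfolding h_def by (rule hseq) (rule lg_bounds)+
        have "g (h n) = t" for n
          unfolding g_def gS_def h_def psi_hit using LS real by simp
        hence "(\<lambda>n. ereal ((f (h n) - f 0) / h n)) = (\<lambda>n. L)"
          using quot hp real by auto
        hence "(\<lambda>n. ereal ((f (h n) - f 0) / h n)) \<longlonglongrightarrow> L" by simp
        thus ?thesis unfolding rh_seq_secant_derivs_def using hp hl by auto
      next
        case PInf
        define h where "h = (\<lambda>k::nat. 1 / (real k + 1 + lg (real k)))"
        have hp: "0 < h n \<and> h n \<le> 1" for n
          using lg_bounds[of "real n"] unfolding h_def by (auto simp: field_simps)
        have hl: "h \<longlonglongrightarrow> 0" unfolding h_def by (rule hseq) (rule lg_bounds)+
        have ge: "g (h n) \<ge> real n" for n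
        proof -
          have ps: "psi (h n) = real n" unfolding h_def by (rule psi_hit)
          have "1 / h n = real n + 1 + lg (real n)" unfolding h_def
            using lg_bounds[of "real n"] by simp
          hence "1 / h n \<ge> real n" using lg_bounds[of "real n"] by simp
          thus ?thesis using LS PInf ps unfolding g_def gS_def by auto
        qed
        have "filterlim (\<lambda>n. g (h n)) at_top sequentially"
          by (rule filterlim_at_top_mono[OF filterlim_real_sequentially]) (use ge in auto)
        hence "(\<lambda>n. ereal (g (h n))) \<longlonglongrightarrow> \<infinity>"
          by (simp add: tendsto_PInfty_eq_at_top)
        hence "(\<lambda>n. ereal ((f (h n) - f 0) / h n)) \<longlonglongrightarrow> L"
          using quot hp PInf by simp
        thus ?thesis unfolding rh_seq_secant_derivs_def using hp hl by auto
      next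
        case MInf
        define h where "h = (\<lambda>k::nat. 1 / (real k + 1 + lg (- (real k + 1))))"
        have hp: "0 < h n \<and> h n \<le> 1" for n
          using lg_bounds[of "- (real n + 1)"] unfolding h_def by (auto simp: field_simps)
        have hl: "h \<longlonglongrightarrow> 0" unfolding h_def by (rule hseq) (rule lg_bounds)+
        have le: "g (h n) \<le> - real n" for n
        proof -
          have ps: "psi (h n) = - (real n + 1)" unfolding h_def by (rule psi_hit)
          have "1 / h n = real n + 1 + lg (- (real n + 1))" unfolding h_def
            using lg_bounds[of "- (real n + 1)"] by simp
          hence "1 / h n \<ge> real n" using lg_bounds[of "- (real n + 1)"] by simp
          hence "- 1 / h n \<le> - real n" by simp
          thus ?thesis using LS MInf ps unfolding g_def gS_def by auto
        qed
        have le': "real n \<le> - g (h n)" for n using le[of n] by linarith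
        have "filterlim (\<lambda>n. - g (h n)) at_top sequentially"
          by (rule filterlim_at_top_mono[OF filterlim_real_sequentially]) (use le' in auto)
        hence "(\<lambda>n. ereal (- g (h n))) \<longlonglongrightarrow> \<infinity>"
          by (subst tendsto_PInfty_eq_at_top)
        hence "(\<lambda>n. - ereal (- g (h n))) \<longlonglongrightarrow> - \<infinity>"
          by (rule tendsto_uminus_ereal)
        hence "(\<lambda>n. ereal ((f (h n) - f 0) / h n)) \<longlonglongrightarrow> L"
          using quot hp MInf by simp
        thus ?thesis unfolding rh_seq_secant_derivs_def using hp hl by auto
      qed
    qed
  qed
qed

end
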